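(* Suppose the current syndrome satisfies $\emptyset\ne\sigma\subseteq\{v_1\}\times C_2$ for a fixed $v_1\in V_1$. Let $(c_1,v_2)\in C_1\times V_2$ be a $Z$-type generator whose local view meets the syndrome, $(\Gamma(c_1)\times\Gamma(v_2))\cap\sigma\neq\emptyset$, and let $F\subseteq\mathrm{supp}(c_1,v_2)$ be non-empty with $F\cap(\{v_1\}\times V_2)=\emptyset$. Then $F$ is not flipped by Small-Set-Flip: whenever $\max_{F'\in\mathcal F}\mathrm{score}(F')>0$, one has $\mathrm{score}(F)<\max_{F'\in\mathcal F}\mathrm{score}(F')$.
   Context: Let $G=(V\cup C,E)$ be a connected $(\Delta_V,\Delta_C)$-biregular bipartite graph with $\Delta_V,\Delta_C\ge 2$, $\Gamma(x)$ the neighbourhood of a vertex $x$, and $G_1=(V_1\cup C_1,E_1)$, $G_2=(V_2\cup C_2,E_2)$ two copies of $G$. The hypergraph product code has qubits $Q=V_1\times V_2\sqcup C_1\times C_2$; $X$-type checks indexed by $V_1\times C_2$, check $(v,c)$ acting on $\{v\}\times\Gamma(c)\sqcup\Gamma(v)\times\{c\}$; $Z$-type generators indexed by $C_1\times V_2$, generator $(c,v)$ with support $\mathrm{supp}(c,v)=\Gamma(c)\times\{v\}\sqcup\{c\}\times\Gamma(v)$. The local view of $(c,v)$ is $\Gamma(c)\times\Gamma(v)$. For $F\subseteq Q$, $\sigma(F)$ is the set of checks acting on an odd number of qubits of $F$; $\sigma$ is the current set of unsatisfied checks. $\mathcal F=\{F: F\subseteq\mathrm{supp}(c,v)\text{ for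 some }(c,v)\in C_1\times V_2\}$. For $F\ne\emptyset$, $\mathrm{score}(F)=(|\sigma|-|\sigma\triangle\sigma(F)|)/|F|$, and $\mathrm{score}(\emptyset)=0$. Small-Set-Flip in each iteration flips a set of $\mathcal F$ of maximum score, provided that maximum is positive. *)

theory Defs
  imports Complex_Main
begin

definition nbV :: "('v \<times> 'c) set \<Rightarrow> 'v \<Rightarrow> 'c set" where
  "nbV E v = {c. (v, c) \<in> E}"

definition nbC :: "('v \<times> 'c) set \<Rightarrow> 'c \<Rightarrow> 'v set" where
  "nbC E c = {v. (v, c) \<in> E}"

definition adj :: "('v \<times> 'c) set \<Rightarrow> (('v + 'c) \<times> ('v + 'c)) set" where
  "adj E = {(Inl v, Inr c) | v c. (v, c) \<in> E} \<union> {(Inr c, Inl v) | v c. (v, c) \<in> E}"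

definition biregular_bipartite ::
  "'v set \<Rightarrow> 'c set \<Rightarrow> ('v \<times> 'c) set \<Rightarrow> nat \<Rightarrow> nat \<Rightarrow> bool" where
  "biregular_bipartite V C E dV dC \<longleftrightarrow>
     finite V \<and> finite C \<and> E \<subseteq> V \<times> C \<and>
     (\<forall>v\<in>V. card (nbV E v) = dV) \<and> (\<forall>c\<in>C. card (nbC E c) = dC)"

definition connected_bipartite :: "'v set \<Rightarrow> 'c set \<Rightarrow> ('v \<times> 'c) set \<Rightarrow> bool" where
  "connected_bipartite V C E \<longleftrightarrow>
     (\<forall>x\<in>Inl ` V \<union> Inr ` C. \<forall>y\<in>Inl ` V \<union> Inr ` C. (x, y) \<in> (adj E)\<^sup>*)"

text \<open>Qubits: V1\<times>V2 (Inl) \<sqcup> C1\<times>C2 (Inr).\<close>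
type_synonym ('v, 'c) qubit = "('v \<times> 'v) + ('c \<times> 'c)"

definition qubits :: "'v set \<Rightarrow> 'c set \<Rightarrow> ('v, 'c) qubit set" where
  "qubits V C = Inl ` (V \<times> V) \<union> Inr ` (C \<times> C)"

definition xcheck_supp :: "('v \<times> 'c) set \<Rightarrow> 'v \<Rightarrow> 'c \<Rightarrow> ('v, 'c) qubit set" where
  "xcheck_supp E v c = Inl ` ({v} \<times> nbC E c) \<union> Inr ` (nbV E v \<times> {c})"

definition zgen_supp :: "('v \<times> 'c) set \<Rightarrow> 'c \<Rightarrow> 'v \<Rightarrow> ('v, 'c) qubit set" where
  "zgen_supp E c v = Inl ` (nbC E c \<times> {v}) \<union> Inr ` ({c} \<times> nbV E v)"

definition syndrome ::
  "'v set \<Rightarrow> 'c set \<Rightarrow> ('v \<times> 'c) set \<Rightarrow> ('v, 'c) qubit set \<Rightarrow> ('v \<times> 'c) set" where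
  "syndrome V C E F = {(v, c) \<in> V \<times> C. odd (card (F \<inter> xcheck_supp E v c))}"

definition flip_family :: "'v set \<Rightarrow> 'c set \<Rightarrow> ('v \<times> 'c) set \<Rightarrow> ('v, 'c) qubit set set" where
  "flip_family V C E = {F. \<exists>c\<in>C. \<exists>v\<in>V. F \<subseteq> zgen_supp E c v}"

definition score ::
  "'v set \<Rightarrow> 'c set \<Rightarrow> ('v \<times> 'c) set \<Rightarrow> ('v \<times> 'c) set \<Rightarrow> ('v, 'c) qubit set \<Rightarrow> real" where
  "score V C E \<sigma> F = (if F = {} then 0 else
     (real (card \<sigma>) - real (card ((\<sigma> - syndrome V C E F) \<union> (syndrome V C E F - \<sigma>)))) / real (card F))"

definition max_score ::
  "'v set \<Rightarrow> 'c set \<Rightarrow> ('v \<times> 'c) set \<Rightarrow> ('v \<times> 'c) set \<Rightarrow> real" where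
  "max_score V C E \<sigma> = Max (score V C E \<sigma> ` flip_family V C E)"

end

theory Submission
  imports Defs
begin

lemma syn_char:
  assumes EVC: "E \<subseteq> V \<times> C" and Fsub: "F \<subseteq> zgen_supp E c1 v2"
  shows "syndrome V C E F = {(v,c). (v,c1)\<in>E \<and> (v2,c)\<in>E \<and> ((Inl(v,v2)\<in>F) \<noteq> (Inr(c1,c)\<in>F))}"
proof (rule set_eqI, clarify)
  fix v c
  have int: "F \<inter> xcheck_supp E v c = (if (v,c1)\<in>E \<and> (v2,c)\<in>E then F \<inter> {Inl(v,v2), Inr(c1,c)} else {})"
    using Fsub by (auto simp: xcheck_supp_def zgen_supp_def nbC_def nbV_def)
  have c2: "card (F \<inter> {Inl(v,v2), Inr(c1,c)}) = (if Inl(v,v2)\<in>F then 1 else 0) + (if Inr(c1,c)\<in>F then 1 else 0)"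
  proof -
    have "F \<inter> {Inl(v,v2), Inr(c1,c)} = (if Inl(v,v2)\<in>F then {Inl(v,v2)} else {}) \<union> (if Inr(c1,c)\<in>F then {Inr(c1,c)} else {})"
      by auto
    then show ?thesis by (auto simp: card_insert_if)
  qed
  show "((v,c) \<in> syndrome V C E F) = ((v,c) \<in> {(v,c). (v,c1)\<in>E \<and> (v2,c)\<in>E \<and> ((Inl(v,v2)\<in>F) \<noteq> (Inr(c1,c)\<in>F))})"
    using EVC unfolding syndrome_def by (auto simp: int c2)
qed

lemma symdiff_card:
  assumes "finite s" "finite t"
  shows "real (card s) - real (card ((s - t) \<union> (t - s))) = 2 * real (card (s \<inter> t)) - real (card t)"
proof -
  have "card ((s - t) \<union> (t - s)) = card (s - t) + card (t - s)"
    using assms by (intro card_Un_disjoint) auto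
  moreover have "card (s - t) = card s - card (s \<inter> t)" using assms card_Diff_subset_Int[of s t] by auto
  moreover have "card (t - s) = card t - card (t \<inter> s)" using assms card_Diff_subset_Int[of t s] by auto
  moreover have "card (s \<inter> t) \<le> card s" "card (s \<inter> t) \<le> card t" using assms by (auto intro: card_mono)
  ultimately show ?thesis by (simp add: Int_commute of_nat_diff)
qed

theorem claim2:
  fixes V :: "'v set" and C :: "'c set" and E :: "('v \<times> 'c) set"
    and dV dC :: nat and err :: "('v, 'c) qubit set" and \<sigma> :: "('v \<times> 'c) set"
    and v1 v2 :: 'v and c1 :: 'c and F :: "('v, 'c) qubit set"
  assumes G: "biregular_bipartite V C E dV dC"
    and conn: "connected_bipartite V C E"
    and dV: "dV \<ge> 2" and dC: "dC \<ge> 2"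
    and err: "err \<subseteq> qubits V C"
    and sigma: "\<sigma> = syndrome V C E err"
    and sne: "\<sigma> \<noteq> {}"
    and v1: "v1 \<in> V"
    and ssub: "\<sigma> \<subseteq> {v1} \<times> C"
    and c1: "c1 \<in> C" and v2: "v2 \<in> V"
    and view: "(nbC E c1 \<times> nbV E v2) \<inter> \<sigma> \<noteq> {}"
    and Fsub: "F \<subseteq> zgen_supp E c1 v2"
    and Fne: "F \<noteq> {}"
    and Fdisj: "F \<inter> Inl ` ({v1} \<times> V) = {}"
  shows "max_score V C E \<sigma> > 0 \<longrightarrow> score V C E \<sigma> F < max_score V C E \<sigma>"
proof
  assume mpos: "max_score V C E \<sigma> > 0"
  have EVC: "E \<subseteq> V \<times> C" and finV: "finite V" and finC: "finite C"
    and dgV: "\<forall>v\<in>V. card (nbV E v) = dV" and dgC: "\<forall>c\<in>C. card (nbC E c) = dC"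
    using G by (auto simp: biregular_bipartite_def)
  have finE: "finite E" using EVC finV finC finite_subset by blast
  have fins: "finite \<sigma>" using ssub finC finite_subset by blast
  obtain v0 c0 where vc0: "v0 \<in> nbC E c1" "c0 \<in> nbV E v2" "(v0,c0) \<in> \<sigma>" using view by auto
  have v1c1: "(v1,c1) \<in> E" using vc0 ssub by (auto simp: nbC_def)
  define A where "A = {u. Inl(u,v2) \<in> F}"
  define B where "B = {c. Inr(c1,c) \<in> F}"
  define \<tau> where "\<tau> = syndrome V C E F"
  have tau: "\<tau> = {(v,c). (v,c1)\<in>E \<and> (v2,c)\<in>E \<and> ((v \<in> A) \<noteq> (c \<in> B))}"
    unfolding \<tau>_def A_def B_def using syn_char[OF EVC Fsub] by simp
  have "\<tau> \<subseteq> V \<times> C" using tau EVC by auto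
  hence finT: "finite \<tau>" using finV finC finite_subset by blast
  have FAB: "F = Inl ` (A \<times> {v2}) \<union> Inr ` ({c1} \<times> B)"
    using Fsub unfolding A_def B_def zgen_supp_def by auto
  have ABsub: "A \<subseteq> nbC E c1" "B \<subseteq> nbV E v2"
    using Fsub unfolding A_def B_def zgen_supp_def by auto
  have "A \<subseteq> V" "B \<subseteq> C" using ABsub EVC by (auto simp: nbC_def nbV_def)
  hence finA: "finite A" and finB: "finite B" using finV finC finite_subset by auto
  have cardF: "card F = card A + card B"
    unfolding FAB by (subst card_Un_disjoint) (auto simp: card_image inj_on_def finA finB card_cartesian_product)
  have v1A: "v1 \<notin> A" using Fdisj v2 unfolding A_def by auto
  have sc: "score V C E \<sigma> F = (2 * real (card (\<sigma> \<inter> \<tau>)) - real (card \<tau>)) / real (card F)"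
    unfolding score_def \<tau>_def using Fne symdiff_card[OF fins, of "syndrome V C E F"] finT \<tau>_def by simp
  have sT: "\<sigma> \<inter> \<tau> \<subseteq> {v1} \<times> B" using ssub v1A by (auto simp: tau)
  have v1B: "{v1} \<times> B \<subseteq> \<tau>" using v1c1 ABsub v1A by (auto simp: tau nbV_def)
  show "score V C E \<sigma> F < max_score V C E \<sigma>"
  proof (cases "score V C E \<sigma> F > 0")
    case False then show ?thesis using mpos by linarith
  next
    case True
    have Fpos: "card F > 0" using True sc by (cases "card F = 0") auto
    have Npos: "2 * real (card (\<sigma> \<inter> \<tau>)) - real (card \<tau>) > 0"
      using True sc Fpos by (simp add: zero_less_divide_iff)
    have card_sT: "card (\<sigma> \<inter> \<tau>) \<le> card B"
      using card_mono[OF _ sT] finB by (simp add: card_cartesian_product)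
    have Aall: "nbC E c1 - {v1} \<subseteq> A"
    proof
      fix u assume u: "u \<in> nbC E c1 - {v1}"
      show "u \<in> A"
      proof (rule ccontr)
        assume uA: "u \<notin> A"
        have "{u} \<times> B \<subseteq> \<tau>" using u uA ABsub by (auto simp: tau nbV_def nbC_def)
        with v1B have "{v1} \<times> B \<union> {u} \<times> B \<subseteq> \<tau>" by auto
        hence "card ({v1} \<times> B \<union> {u} \<times> B) \<le> card \<tau>" using finT card_mono by blast
        moreover have "card ({v1} \<times> B \<union> {u} \<times> B) = 2 * card B"
          using u finB by (subst card_Un_disjoint) (auto simp: card_cartesian_product)
        ultimately show False using Npos card_sT by linarith
      qed
    qed
    have "card (nbC E c1) = dC" using dgC c1 by auto
    hence "card (nbC E c1 - {v1}) \<ge> 1" using dC v1c1 by (simp add: nbC_def)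
    then obtain u where u: "u \<in> nbC E c1" "u \<noteq> v1"
      by (metis Diff_iff card.empty equals0I insert_iff not_one_le_zero)
    have uA: "u \<in> A" using u Aall by auto
    have Bne: "B \<noteq> {}" using sT Npos by (cases "B = {}") auto
    have Fge2: "card F \<ge> 2"
    proof -
      have "card A \<ge> 1" using uA finA by (metis One_nat_def Suc_leI card_gt_0_iff empty_iff)
      moreover have "card B \<ge> 1" using Bne finB by (metis One_nat_def Suc_leI card_gt_0_iff)
      ultimately show ?thesis using cardF by simp
    qed
    have Kdef: "card (nbV E v2) = dV" using dgV v2 by auto
    have finK: "finite (nbV E v2)" using Kdef dV by (metis card.infinite not_numeral_le_zero)
    have tauK: "card \<tau> \<ge> dV"
    proof -
      have "{v1} \<times> B \<union> {u} \<times> (nbV E v2 - B) \<subseteq> \<tau>" using v1B u uA by (auto simp: tau nbV_def nbC_def)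
      hence "card ({v1} \<times> B \<union> {u} \<times> (nbV E v2 - B)) \<le> card \<tau>" using finT card_mono by blast
      moreover have "card ({v1} \<times> B \<union> {u} \<times> (nbV E v2 - B)) = card B + (dV - card B)"
        using u finB finK Kdef ABsub by (subst card_Un_disjoint) (auto simp: card_cartesian_product card_Diff_subset)
      moreover have "card B \<le> dV" using Kdef ABsub finK card_mono by metis
      ultimately show ?thesis by linarith
    qed
    define Gs where "Gs = {Inl(v1,v2) :: ('v,'c) qubit}"
    have Gsub: "Gs \<subseteq> zgen_supp E c1 v2" using v1c1 unfolding Gs_def zgen_supp_def nbC_def by auto
    define \<tau>G where "\<tau>G = syndrome V C E Gs"
    have tauG: "\<tau>G = {v1} \<times> nbV E v2"
      unfolding \<tau>G_def syn_char[OF EVC Gsub] using v1c1 by (auto simp: Gs_def nbV_def)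
    have finTG: "finite \<tau>G" using tauG finK by simp
    have scG: "score V C E \<sigma> Gs = 2 * real (card (\<sigma> \<inter> \<tau>G)) - real (card \<tau>G)"
      unfolding score_def using symdiff_card[OF fins finTG] by (simp add: Gs_def \<tau>G_def)
    have "\<sigma> \<inter> \<tau> \<subseteq> \<sigma> \<inter> \<tau>G" using sT ABsub tauG by auto
    hence "card (\<sigma> \<inter> \<tau>) \<le> card (\<sigma> \<inter> \<tau>G)" using fins card_mono by blast
    moreover have "card \<tau>G = dV" using tauG Kdef by (simp add: card_cartesian_product)
    ultimately have N_le: "2 * real (card (\<sigma> \<inter> \<tau>)) - real (card \<tau>) \<le> score V C E \<sigma> Gs"
      using scG tauK by simp
    have lt: "score V C E \<sigma> F < 2 * real (card (\<sigma> \<inter> \<tau>)) - real (card \<tau>)"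
    proof -
      have "real (card F) > 1" using Fge2 by simp
      then show ?thesis unfolding sc using Npos by (simp add: divide_less_eq)
    qed
    have finQ: "finite (qubits V C)" using finV finC by (simp add: qubits_def)
    have zq: "\<And>c v. c \<in> C \<Longrightarrow> v \<in> V \<Longrightarrow> zgen_supp E c v \<subseteq> qubits V C"
      using EVC by (auto simp: zgen_supp_def qubits_def nbC_def nbV_def)
    have "flip_family V C E \<subseteq> Pow (qubits V C)" using zq unfolding flip_family_def by blast
    hence finFF: "finite (flip_family V C E)" using finQ finite_subset by blast
    have "Gs \<in> flip_family V C E" using Gsub c1 v2 unfolding flip_family_def by blast
    hence "score V C E \<sigma> Gs \<le> max_score V C E \<sigma>" unfolding max_score_def
      using finFF by (intro Max_ge) auto
    then show ?thesis using lt N_le by linarith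
  qed
qed

end
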